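(* Let $a$ be a nonzero element of $\mathbb Z_g$, and let $i$ be an integer with $1\le i\le k$. If $\vec \theta \in \Lambda$, then \[ \sum_{1 \leq m < i} \theta_{\{m,i\},-a} + \sum_{i < m \leq k} \theta_{\{i,m\},a} \equiv 0 \pmod{2 \pi},\] where an empty sum is $0$.
   Context: Let $g\ge 2$, $k\ge 2$ be integers, $\mathbb Z_g$ the integers mod $g$, and $d=\binom{k}{2}(g-1)$. Index the coordinates of $\mathbb R^d$ by pairs $(\{i,j\},a)$ with $1\le i<j\le k$ and $a\in\mathbb Z_g\setminus\{0\}$. Define $Z:(\mathbb Z_g)^k\to\mathbb R^d$ by $[Z(\vec x)]_{\{i,j\},a}=1-1/g$ if $x_i-x_j=a$ and $-1/g$ otherwise. Define $\Phi(\vec\theta)=\sum_{\vec x\in(\mathbb Z_g)^k} g^{-k}e^{i\vec\theta\cdot Z(\vec x)}$ for $\vec\theta\in\mathbb R^d$, and $\Lambda=\{\vec\theta\in\mathbb R^d: |\Phi(\vec\theta)|=1\}$. *)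

theory Defs
  imports "HOL-Analysis.Analysis"
begin

text \<open>Elements of Z_g are represented by integers in {0..<g}; the coordinate
  ({i,j},a) of R^d (1 \<le> i < j \<le> k, a \<in> Z_g nonzero) is represented by the
  triple (i, j, a) with a \<in> {1..<g}.  Vectors theta in R^d are functions on
  these triples (values at other triples are irrelevant).\<close>

definition coord_index :: "nat \<Rightarrow> nat \<Rightarrow> (nat \<times> nat \<times> int) set" where
  "coord_index g k = {(i, j, a). 1 \<le> i \<and> i < j \<and> j \<le> k \<and> 1 \<le> a \<and> a < int g}"

definition Zg_vectors :: "nat \<Rightarrow> nat \<Rightarrow> (nat \<Rightarrow> int) set" where
  "Zg_vectors g k = PiE {1..k} (\<lambda>_. {0..<int g})"

definition Zvec :: "nat \<Rightarrow> (nat \<Rightarrow> int) \<Rightarrow> nat \<times> nat \<times> int \<Rightarrow> real" where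
  "Zvec g x = (\<lambda>(i, j, a). if (x i - x j) mod int g = a then 1 - 1 / real g else - 1 / real g)"

definition Phi :: "nat \<Rightarrow> nat \<Rightarrow> (nat \<times> nat \<times> int \<Rightarrow> real) \<Rightarrow> complex" where
  "Phi g k \<theta> = (\<Sum>x\<in>Zg_vectors g k. (1 / of_nat g ^ k) *
      exp (\<i> * of_real (\<Sum>c\<in>coord_index g k. \<theta> c * Zvec g x c)))"

definition Lambda_set :: "nat \<Rightarrow> nat \<Rightarrow> (nat \<times> nat \<times> int \<Rightarrow> real) set" where
  "Lambda_set g k = {\<theta>. cmod (Phi g k \<theta>) = 1}"

end

theory Submission imports Defs begin
lemma avg_unit:
  fixes S :: "'a set" and f :: "'a \<Rightarrow> real"
  assumes fin: "finite S" and ne: "S \<noteq> {}"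
   and h: "cmod (\<Sum>x\<in>S. (1 / of_nat (card S)) * exp (\<i> * of_real (f x))) = 1"
  assumes xS: "x \<in> S"
  shows "exp (\<i> * of_real (f x)) = (\<Sum>x\<in>S. (1 / of_nat (card S)) * exp (\<i> * of_real (f x)))"
proof -
  define z where "z x = exp (\<i> * of_real (f x))" for x
  define N where "N = real (card S)"
  have N: "N > 0" using fin ne by (simp add: N_def card_gt_0_iff)
  define w where "w = (\<Sum>x\<in>S. (1 / of_nat (card S)) * z x)"
  have w1: "cmod w = 1" using h by (simp add: w_def z_def)
  have zn: "cmod (z y) = 1" for y by (simp add: z_def norm_exp_i_times)
  have ww: "cnj w * w = 1"
  proof -
    have "complex_of_real ((cmod w)^2) = w * cnj w" by (rule complex_norm_square)
    then show ?thesis using w1 by (simp add: mult.commute)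
  qed
  have sw: "(\<Sum>x\<in>S. z x) = of_real N * w"
  proof -
    have "of_real N * w = (\<Sum>x\<in>S. of_real N * ((1 / of_nat (card S)) * z x))"
      by (simp add: w_def sum_distrib_left)
    also have "\<dots> = (\<Sum>x\<in>S. z x)" using N by (simp add: N_def)
    finally show ?thesis by simp
  qed
  have sr: "(\<Sum>x\<in>S. Re (cnj w * z x)) = N"
  proof -
    have "(\<Sum>x\<in>S. Re (cnj w * z x)) = Re (cnj w * (\<Sum>x\<in>S. z x))"
      by (simp add: Re_sum sum_distrib_left)
    also have "\<dots> = Re (of_real N * (cnj w * w))" by (simp add: sw algebra_simps)
    also have "\<dots> = N" using ww by simp
    finally show ?thesis .
  qed
  have le: "Re (cnj w * z y) \<le> 1" for y
    using complex_Re_le_cmod[of "cnj w * z y"] by (simp add: norm_mult w1 zn)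
  have "(\<Sum>x\<in>S. 1 - Re (cnj w * z x)) = 0"
    using sr by (simp add: sum_subtractf N_def)
  then have all: "\<forall>y\<in>S. 1 - Re (cnj w * z y) = 0"
  proof -
    have "\<And>y. y\<in>S \<Longrightarrow> 0 \<le> 1 - Re (cnj w * z y)" using le by simp
    from sum_nonneg_eq_0_iff[of S "\<lambda>y. 1 - Re (cnj w * z y)", OF fin this] show ?thesis using \<open>(\<Sum>x\<in>S. 1 - Re (cnj w * z x)) = 0\<close> by blast
  qed
  define u where "u = cnj w * z x"
  have Reu: "Re u = 1" using all xS by (simp add: u_def)
  have "cmod u = 1" by (simp add: u_def norm_mult w1 zn)
  then have "(Re u)^2 + (Im u)^2 = 1" using cmod_power2[of u] by simp
  then have "Im u = 0" using Reu by simp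
  then have "u = 1" using Reu by (simp add: complex_eq_iff)
  then have "w * u = w" by simp
  moreover have "w * u = z x" using ww proof - have "w*u = (w * cnj w) * z x" by (simp add: u_def mult.assoc) also have "... = z x" using ww by (simp add: mult.commute) finally show ?thesis . qed
  ultimately have "z x = w" by simp
  then show ?thesis by (simp add: z_def w_def)
qed

lemma fin_coord: "finite (coord_index g k)"
proof -
  have "coord_index g k \<subseteq> {1..k} \<times> {1..k} \<times> {1..<int g}"
    by (auto simp: coord_index_def)
  then show ?thesis by (rule finite_subset) auto
qed

theorem lemma2p5:
  fixes g k i :: nat and a :: int and \<theta> :: "nat \<times> nat \<times> int \<Rightarrow> real"
  assumes "g \<ge> 2" and "k \<ge> 2"
    and "1 \<le> a" and "a < int g"
    and "1 \<le> i" and "i \<le> k"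
    and "\<theta> \<in> Lambda_set g k"
  shows "\<exists>n::int. (\<Sum>m\<in>{1..<i}. \<theta> (m, i, (- a) mod int g))
                  + (\<Sum>m\<in>{i<..k}. \<theta> (i, m, a)) = 2 * pi * of_int n"
proof -
  define S where "S = Zg_vectors g k"
  define C where "C = coord_index g k"
  define F where "F x = (\<Sum>c\<in>C. \<theta> c * Zvec g x c)" for x
  have finS: "finite S" by (simp add: S_def Zg_vectors_def finite_PiE)
  have cardS: "card S = g ^ k" by (simp add: S_def Zg_vectors_def card_PiE)
  have neS: "S \<noteq> {}" using cardS assms(1) by (metis card.empty power_eq_0_iff not_numeral_le_zero)
  have hP: "cmod (\<Sum>x\<in>S. (1 / of_nat (card S)) * exp (\<i> * of_real (F x))) = 1"
    using assms(7) unfolding Lambda_set_def Phi_def S_def[symmetric] F_def C_def cardS of_nat_power by simp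
  define x0 where "x0 = (\<lambda>j::nat. if j \<in> {1..k} then (0::int) else undefined)"
  define y where "y = (\<lambda>j::nat. if j \<in> {1..k} then (if j = i then a else (0::int)) else undefined)"
  have x0S: "x0 \<in> S" using assms(1) by (auto simp: S_def Zg_vectors_def x0_def)
  have yS: "y \<in> S" using assms(3,4) by (auto simp: S_def Zg_vectors_def y_def)
  have "exp (\<i> * of_real (F y)) = exp (\<i> * of_real (F x0))"
    using avg_unit[OF finS neS hP x0S] avg_unit[OF finS neS hP yS] by simp
  then obtain n :: int where n: "\<i> * of_real (F y) = \<i> * of_real (F x0) + (of_int (2 * n) * pi) * \<i>"
    using exp_eq by blast
  have diff: "F y - F x0 = 2 * pi * of_int n"
  proof -
    have "Im (\<i> * of_real (F y)) = Im (\<i> * of_real (F x0) + (of_int (2 * n) * pi) * \<i>)"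
      using n by simp
    then show ?thesis by simp
  qed
  define T where "T = (\<lambda>m. (m, i, (-a) mod int g)) ` {1..<i} \<union> (\<lambda>m. (i, m, a)) ` {i<..k}"
  have amod: "a mod int g = a" using assms(3,4) by simp
  have ga0: "(-a) mod int g = int g - a" using assms(3,4) amod by (simp add: zmod_zminus1_eq_if)
  have ga1: "1 \<le> (-a) mod int g" "(-a) mod int g < int g" using ga0 assms(3,4) by auto
  have TC: "T \<subseteq> C" using assms ga1 by (auto simp: T_def C_def coord_index_def)
  have pt: "Zvec g y c - Zvec g x0 c = (if c \<in> T then 1 else 0)" if "c \<in> C" for c
  proof -
    obtain p q b where c: "c = (p,q,b)" by (cases c)
    have hc: "1 \<le> p" "p < q" "q \<le> k" "1 \<le> b" "b < int g" using that by (auto simp: c C_def coord_index_def)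
    have z0: "Zvec g x0 c = - 1 / real g" using hc by (simp add: Zvec_def x0_def c)
    have z1: "Zvec g y c = (if c \<in> T then 1 - 1 / real g else - 1 / real g)"
    proof (cases "p = i")
      case True
      then have "q \<noteq> i" using hc by auto
      then show ?thesis using True hc amod by (auto simp: Zvec_def y_def c T_def)
    next
      case False
      show ?thesis
      proof (cases "q = i")
        case True
        then show ?thesis using False hc ga0 by (auto simp: Zvec_def y_def c T_def)
      next
        case False2: False
        then show ?thesis using False hc by (auto simp: Zvec_def y_def c T_def)
      qed
    qed
    show ?thesis using z0 z1 by simp
  qed
  have "F y - F x0 = (\<Sum>c\<in>C. if c \<in> T then \<theta> c else 0)"
    unfolding F_def sum_subtractf[symmetric]
    by (rule sum.cong) (auto simp: pt right_diff_distrib[symmetric])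
  also have "\<dots> = sum \<theta> (C \<inter> T)" using sum.inter_restrict[OF fin_coord[of g k], of \<theta> T] by (simp add: C_def)
  also have "C \<inter> T = T" using TC by blast
  also have "sum \<theta> T = (\<Sum>m\<in>{1..<i}. \<theta> (m, i, (- a) mod int g)) + (\<Sum>m\<in>{i<..k}. \<theta> (i, m, a))"
  proof -
    have "sum \<theta> T = sum \<theta> ((\<lambda>m. (m, i, (-a) mod int g)) ` {1..<i}) + sum \<theta> ((\<lambda>m. (i, m, a)) ` {i<..k})"
      unfolding T_def by (rule sum.union_disjoint) auto
    also have "\<dots> = (\<Sum>m\<in>{1..<i}. \<theta> (m, i, (- a) mod int g)) + (\<Sum>m\<in>{i<..k}. \<theta> (i, m, a))"
      by (simp add: sum.reindex inj_on_def)
    finally show ?thesis .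
  qed
  finally have "F y - F x0 = (\<Sum>m\<in>{1..<i}. \<theta> (m, i, (- a) mod int g)) + (\<Sum>m\<in>{i<..k}. \<theta> (i, m, a))" .
  then show ?thesis using diff by metis
qed
end
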